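(* Let $1<p<2$ and let $D:=\{z\in\mathbb{C}\colon 0<\operatorname{Re} z<\tfrac{\pi}{2},\ \operatorname{Im} z>0\}$. For $z\in D$ define $$f(z):=z^{-p}-(\pi-z)^{-p}+(\pi+z)^{-p}-(2\pi-z)^{-p}+(2\pi+z)^{-p}-\cdots=z^{-p}+\sum_{k=1}^{\infty}\big[(k\pi+z)^{-p}-(k\pi-z)^{-p}\big],$$ where the principal branch of the power function is used (so $z^{-p}>0$ for $z>0$). Let $\Delta_p:=\{w\in\mathbb{C}\colon -\tfrac{\pi p}{2}<\arg w\le 0\}$, where $\arg$ takes values in $(-\pi,\pi]$ and $\arg 0:=0$. Then $f(D)\subseteq\Delta_p$.
   Context: The principal branch: $w^{-p}=\exp(-p\log w)$ with $\log$ the principal logarithm, $\arg\in(-\pi,\pi]$. *)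

theory Defs
  imports "HOL-Analysis.Analysis"
begin

text \<open>Principal branch: for complex w, w powr a = exp (a * Ln w) (w \<noteq> 0), with Arg in (-pi, pi], Arg 0 = 0.\<close>

definition D_set :: "complex set" where
  "D_set = {z. 0 < Re z \<and> Re z < pi / 2 \<and> Im z > 0}"

definition f_p :: "real \<Rightarrow> complex \<Rightarrow> complex" where
  "f_p p z = z powr (- of_real p)
     + (\<Sum>k. (of_real (real (Suc k) * pi) + z) powr (- of_real p)
            - (of_real (real (Suc k) * pi) - z) powr (- of_real p))"

definition Delta_p :: "real \<Rightarrow> complex set" where
  "Delta_p p = {w. - (pi * p / 2) < Arg w \<and> Arg w \<le> 0}"

end

theory Submission
  imports Defs "HOL-Complex_Analysis.Complex_Analysis"
begin

lemma powr_polar: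
  fixes w :: complex
  assumes "w \<noteq> 0"
  shows "w powr (of_real a) = of_real (norm w powr a) * cis (a * Arg w)"
proof -
  have "w powr (of_real a) = exp (of_real a * Ln w)" using assms by (simp add: powr_def)
  also have "\<dots> = exp (of_real (a * ln (norm w)) + \<i> * of_real (a * Arg w))"
    using assms by (simp add: Ln_Arg algebra_simps)
  also have "\<dots> = of_real (norm w powr a) * cis (a * Arg w)"
    using assms by (simp add: exp_add cis_conv_exp powr_def exp_of_real[symmetric] mult.commute)
  finally show ?thesis .
qed

lemma powr_polar':
  fixes w :: complex
  assumes "w \<noteq> 0"
  shows "w powr (- of_real a) = of_real (norm w powr (-a)) * cis (- a * Arg w)"
  using powr_polar[OF assms, of "-a"] by simp

lemma norm_powr_neg: "norm ((w::complex) powr (- of_real a)) = norm w powr (-a)"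
  by (subst norm_powr_real_powr') auto

lemma norm_powr_le:
  fixes w :: complex
  assumes "0 < A" "A \<le> norm w" "0 \<le> a"
  shows "norm (w powr (- of_real a)) \<le> A powr (-a)"
  unfolding norm_powr_neg using assms by (intro powr_mono2') auto

lemma Im_polar: "Im (of_real r * cis t) = r * sin t" by simp
lemma Re_polar: "Re (of_real r * cis t) = r * cos t" by simp

lemma Arg_Re_pos: "0 < Re w \<Longrightarrow> \<bar>Arg w\<bar> < pi/2"
  using Re_Ln_pos_lt_imp[of w] by (metis Arg_eq_Im_Ln complex.sel(1) less_irrefl zero_complex.simps(1))

lemma Arg_Re_nonneg: "0 \<le> Re w \<Longrightarrow> \<bar>Arg w\<bar> \<le> pi/2"
  apply (cases "w = 0") apply (simp add: Arg_zero)
  using Re_Ln_pos_le[of w] by (simp add: Arg_eq_Im_Ln)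

lemma Arg_nonneg_iff: "0 \<le> Arg w \<longleftrightarrow> 0 \<le> Im w" by (rule Arg_less_0)


definition TT :: "complex set" where "TT = {z. 0 \<le> Re z \<and> Re z \<le> pi/2}"
definition aa :: "real \<Rightarrow> nat \<Rightarrow> complex \<Rightarrow> complex" where
  "aa p k z = (of_real (real k * pi) + z) powr (- of_real p)"
definition bb :: "real \<Rightarrow> nat \<Rightarrow> complex \<Rightarrow> complex" where
  "bb p k z = (of_real (real k * pi) - z) powr (- of_real p)"
definition tt :: "real \<Rightarrow> nat \<Rightarrow> complex \<Rightarrow> complex" where
  "tt p k z = aa p (Suc k) z - bb p (Suc k) z"
definition RR :: "real \<Rightarrow> complex \<Rightarrow> complex" where
  "RR p z = (\<Sum>k. tt p k z)"

lemma f_p_eq: "f_p p z = z powr (- of_real p) + RR p z"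
  by (simp add: f_p_def RR_def tt_def aa_def bb_def)

lemma aa0: "aa p 0 z = z powr (- of_real p)" by (simp add: aa_def)

lemma D_eq: "D_set = {z. 0 < Re z} \<inter> {z. Re z < pi/2} \<inter> {z. 0 < Im z}"
  by (auto simp: D_set_def)

lemma open_D: "open D_set"
proof -
  have "open {z::complex. 0 < Re z}" "open {z::complex. Re z < pi/2}" "open {z::complex. 0 < Im z}"
    by (auto intro!: open_Collect_less continuous_intros)
  then show ?thesis unfolding D_eq by (intro open_Int)
qed

lemma convex_D: "convex D_set"
  unfolding D_eq by (intro convex_Int convex_halfspace_Re_gt convex_halfspace_Re_lt convex_halfspace_Im_gt)

lemma D_sub_TT: "D_set \<subseteq> TT" by (auto simp: D_set_def TT_def)

context
  fixes p :: real
  assumes p1: "1 < p" and p2: "p < 2"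
begin

lemma Re_plus_bound: "z \<in> TT \<Longrightarrow> 1 \<le> k \<Longrightarrow> real k * pi / 2 \<le> Re (of_real (real k * pi) + z)"
proof -
  assume z: "z \<in> TT" and k: "1 \<le> k"
  have "0 \<le> real k * pi" using pi_gt_zero by simp
  then show ?thesis using z unfolding TT_def by simp
qed

lemma Re_minus_bound: "z \<in> TT \<Longrightarrow> 1 \<le> k \<Longrightarrow> real k * pi / 2 \<le> Re (of_real (real k * pi) - z)"
proof -
  assume z: "z \<in> TT" and k: "1 \<le> k"
  have "pi \<le> real k * pi" using k pi_gt_zero by simp
  moreover have "Re z \<le> pi/2" using z by (simp add: TT_def)
  moreover have "Re (of_real (real k * pi) - z) = real k * pi - Re z" by simp
  ultimately show ?thesis by linarith
qed

lemma aa_bound: "z \<in> TT \<Longrightarrow> 1 \<le> k \<Longrightarrow> norm (aa p k z) \<le> (real k * pi / 2) powr (-p)"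
  unfolding aa_def
proof (rule norm_powr_le)
  assume z: "z \<in> TT" and k: "1 \<le> k"
  show "0 < real k * pi / 2" using k pi_gt_zero by simp
  show "real k * pi / 2 \<le> norm (of_real (real k * pi) + z)"
    using Re_plus_bound[OF z k] complex_Re_le_cmod[of "of_real (real k * pi) + z"] by linarith
qed (use p1 in auto)

lemma bb_bound: "z \<in> TT \<Longrightarrow> 1 \<le> k \<Longrightarrow> norm (bb p k z) \<le> (real k * pi / 2) powr (-p)"
  unfolding bb_def
proof (rule norm_powr_le)
  assume z: "z \<in> TT" and k: "1 \<le> k"
  show "0 < real k * pi / 2" using k pi_gt_zero by simp
  show "real k * pi / 2 \<le> norm (of_real (real k * pi) - z)"
    using Re_minus_bound[OF z k] complex_Re_le_cmod[of "of_real (real k * pi) - z"] by linarith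
qed (use p1 in auto)

definition MM :: "nat \<Rightarrow> real" where "MM k = 2 * (real (Suc k) * pi / 2) powr (-p)"

lemma tt_bound: "z \<in> TT \<Longrightarrow> norm (tt p k z) \<le> MM k"
proof -
  assume z: "z \<in> TT"
  have "norm (tt p k z) \<le> norm (aa p (Suc k) z) + norm (bb p (Suc k) z)"
    unfolding tt_def by (rule norm_triangle_ineq4)
  also have "\<dots> \<le> MM k" unfolding MM_def using aa_bound[OF z, of "Suc k"] bb_bound[OF z, of "Suc k"] by simp
  finally show ?thesis .
qed

lemma MM_summable: "summable MM"
proof -
  have "summable (\<lambda>n. real n powr (-p))" using p1 by (simp add: summable_real_powr_iff)
  then have "summable (\<lambda>n. real (Suc n) powr (-p))" by (subst summable_Suc_iff)
  then have "summable (\<lambda>n. (2 * (pi/2) powr (-p)) * real (Suc n) powr (-p))"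
    by (rule summable_mult)
  moreover have "MM n = (2 * (pi/2) powr (-p)) * real (Suc n) powr (-p)" for n
  proof -
    have "real (Suc n) * pi / 2 = real (Suc n) * (pi/2)" by simp
    then have "(real (Suc n) * pi / 2) powr (-p) = real (Suc n) powr (-p) * (pi/2) powr (-p)"
      using pi_gt_zero by (simp only: powr_mult[of "real (Suc n)" "pi/2"])
    then show ?thesis unfolding MM_def by simp
  qed
  ultimately have "summable (\<lambda>n. MM n)" by simp
  then show ?thesis by simp
qed

lemma tt_summable: "z \<in> TT \<Longrightarrow> summable (\<lambda>k. tt p k z)"
  by (rule summable_comparison_test[OF _ MM_summable]) (use tt_bound in auto)

lemma tt_ulim: "uniform_limit TT (\<lambda>n z. \<Sum>i<n. tt p i z) (RR p) sequentially"
  unfolding RR_def by (rule Weierstrass_m_test[OF tt_bound MM_summable])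

lemma Re_plus_pos: "z \<in> TT \<Longrightarrow> 0 < Re (of_real (real (Suc k) * pi) + z)"
proof -
  assume z: "z \<in> TT"
  have "0 < real (Suc k) * pi / 2" using pi_gt_zero by simp
  moreover have "real (Suc k) * pi / 2 \<le> Re (of_real (real (Suc k) * pi) + z)"
    using Re_plus_bound[OF z, of "Suc k"] by simp
  ultimately show ?thesis by linarith
qed

lemma Re_minus_pos: "z \<in> TT \<Longrightarrow> 0 < Re (of_real (real (Suc k) * pi) - z)"
proof -
  assume z: "z \<in> TT"
  have "0 < real (Suc k) * pi / 2" using pi_gt_zero by simp
  moreover have "real (Suc k) * pi / 2 \<le> Re (of_real (real (Suc k) * pi) - z)"
    using Re_minus_bound[OF z, of "Suc k"] by simp
  ultimately show ?thesis by linarith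
qed

lemma tt_cont: "continuous_on TT (tt p k)"
proof -
  have c1: "continuous_on TT (\<lambda>z. (of_real (real (Suc k) * pi) + z) powr (- of_real p))"
    apply (rule continuous_on_powr_complex)
    using Re_plus_pos[of _ k] apply force
    using Re_plus_pos[of _ k] apply (metis less_irrefl zero_complex.sel(1))
    apply (intro continuous_intros)+
    done
  have c2: "continuous_on TT (\<lambda>z. (of_real (real (Suc k) * pi) - z) powr (- of_real p))"
    apply (rule continuous_on_powr_complex)
    using Re_minus_pos[of _ k] apply force
    using Re_minus_pos[of _ k] apply (metis less_irrefl zero_complex.sel(1))
    apply (intro continuous_intros)+
    done
  show ?thesis unfolding tt_def aa_def bb_def by (intro continuous_on_diff c1 c2)
qed

lemma RR_cont: "continuous_on TT (RR p)"
  by (rule uniform_limit_theorem[OF _ tt_ulim]) (auto intro!: always_eventually continuous_on_sum tt_cont)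

lemma tt_hol: "tt p k holomorphic_on D_set"
  unfolding tt_def aa_def bb_def
proof (intro holomorphic_intros)
  fix z assume z: "z \<in> D_set"
  then have "z \<in> TT" using D_sub_TT by auto
  then have "0 < Re (of_real (real (Suc k) * pi) + z)" "0 < Re (of_real (real (Suc k) * pi) - z)"
    using Re_plus_pos Re_minus_pos by auto
  then show "of_real (real (Suc k) * pi) + z \<notin> \<real>\<^sub>\<le>\<^sub>0" "of_real (real (Suc k) * pi) - z \<notin> \<real>\<^sub>\<le>\<^sub>0"
    by (auto simp: complex_nonpos_Reals_iff)
qed

lemma RR_hol: "RR p holomorphic_on D_set"
proof (rule holomorphic_uniform_sequence[OF open_D])
  show "(\<lambda>z. \<Sum>i<n. tt p i z) holomorphic_on D_set" for n
    by (intro holomorphic_intros tt_hol)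
  fix x assume "x \<in> D_set"
  then obtain d where d: "0 < d" "cball x d \<subseteq> D_set" using open_D open_contains_cball by blast
  then show "\<exists>d>0. cball x d \<subseteq> D_set \<and> uniform_limit (cball x d) (\<lambda>n z. \<Sum>i<n. tt p i z) (RR p) sequentially"
    using uniform_limit_on_subset[OF tt_ulim] D_sub_TT by (intro exI[of _ d]) auto
qed

lemma f_cont: "continuous_on (TT - {0}) (f_p p)"
proof -
  have "continuous_on (TT - {0}) (\<lambda>z. z powr (- of_real p) + RR p z)"
    by (intro continuous_intros continuous_on_subset[OF RR_cont]) (auto simp: TT_def)
  then show ?thesis by (simp add: f_p_eq[abs_def])
qed

lemma f_hol: "f_p p holomorphic_on D_set"
proof -
  have "(\<lambda>z. z powr (- of_real p) + RR p z) holomorphic_on D_set"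
    by (intro holomorphic_intros RR_hol) (auto simp: D_set_def complex_nonpos_Reals_iff)
  then show ?thesis by (simp add: f_p_eq[abs_def])
qed

end

context
  fixes p :: real
  assumes p1: "1 < p" and p2: "p < 2"
begin

lemma pc: "0 < p * pi / 2" "p * pi / 2 < pi" "pi / 2 < p * pi / 2"
  using p1 p2 pi_gt_zero by (auto simp: field_simps)

lemma cos_c_nonpos: "cos (p * pi / 2) \<le> 0"
  using cos_lt_zero_pi[of "p * pi / 2"] pc by auto

lemma sin_c_pos: "0 < sin (p * pi / 2)"
  using sin_gt_zero pc by auto

lemma Im_c_powr_nonneg:
  assumes "z \<noteq> 0" "0 \<le> Re z" "0 \<le> Im z"
  shows "0 \<le> Im (cis (p * pi / 2) * z powr (- of_real p))"
proof -
  have a1: "0 \<le> Arg z" using assms Arg_less_0 by auto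
  have a2: "Arg z \<le> pi/2" using Arg_Re_nonneg[of z] assms by auto
  have "cis (p * pi / 2) * z powr (- of_real p) = of_real (norm z powr (-p)) * cis (p * pi / 2 + (- p * Arg z))"
    by (metis powr_polar' assms(1) cis_mult mult.left_commute)
  moreover have "0 \<le> sin (p * pi / 2 + (- p * Arg z))"
  proof (rule sin_ge_zero)
    have "p * Arg z \<le> p * (pi/2)" using a2 p1 by (intro mult_left_mono) auto
    then show "0 \<le> p * pi / 2 + - p * Arg z" by simp
    have "0 \<le> p * Arg z" using a1 p1 by simp
    then show "p * pi / 2 + - p * Arg z \<le> pi" using pc(2) by linarith
  qed
  ultimately show ?thesis by simp
qed

lemma Im_powr_nonpos:
  assumes "z \<noteq> 0" "0 \<le> Re z" "0 \<le> Im z"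
  shows "Im (z powr (- of_real p)) \<le> 0"
proof -
  have a1: "0 \<le> Arg z" using assms Arg_less_0 by auto
  have a2: "Arg z \<le> pi/2" using Arg_Re_nonneg[of z] assms by auto
  have h: "p * Arg z \<le> p * pi / 2" using mult_left_mono[OF a2, of p] p1 by simp
  have "0 \<le> sin (p * Arg z)"
  proof (rule sin_ge_zero)
    show "0 \<le> p * Arg z" using a1 p1 by simp
    show "p * Arg z \<le> pi" using h pc(2) by linarith
  qed
  then show ?thesis using assms by (simp add: powr_polar')
qed

lemma Im_powr_neg:
  assumes "0 \<le> Re z" "0 < Im z"
  shows "Im (z powr (- of_real p)) < 0"
proof -
  have z: "z \<noteq> 0" using assms by auto
  have a1: "0 < Arg z" using assms Arg_pos_iff by auto
  have a2: "Arg z \<le> pi/2" using Arg_Re_nonneg[of z] assms by auto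
  have h: "p * Arg z \<le> p * pi / 2" using mult_left_mono[OF a2, of p] p1 by simp
  have "0 < sin (p * Arg z)"
  proof (rule sin_gt_zero)
    show "0 < p * Arg z" using a1 p1 by simp
    show "p * Arg z < pi" using h pc(2) by linarith
  qed
  moreover have "0 < norm z powr (-p)" using z by simp
  ultimately show ?thesis using z by (simp add: powr_polar')
qed

lemma Im_powr_nonneg_low:
  assumes "0 < Re z" "Im z \<le> 0"
  shows "0 \<le> Im (z powr (- of_real p))"
proof -
  have z: "z \<noteq> 0" using assms by auto
  have a1: "Arg z \<le> 0"
  proof (rule ccontr)
    assume "\<not> Arg z \<le> 0"
    then have "0 < Arg z" by simp
    then show False using assms Arg_pos_iff[of z] by auto
  qed
  have a2: "- (pi/2) < Arg z" using Arg_Re_pos[of z] assms by auto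
  have h: "- p * Arg z \<le> p * pi / 2" using mult_left_mono[of "- Arg z" "pi/2" p] a2 p1 by simp
  have "0 \<le> sin (- p * Arg z)"
  proof (rule sin_ge_zero)
    show "0 \<le> - p * Arg z" using a1 p1 by (simp add: mult_nonneg_nonpos)
    show "- p * Arg z \<le> pi" using h pc(2) by linarith
  qed
  then show ?thesis using z by (simp add: powr_polar' mult_nonneg_nonpos)
qed

lemma Im_powr_nonpos':
  assumes "0 < Re w" "0 \<le> Im w"
  shows "Im (w powr (- of_real p)) \<le> 0"
proof -
  have "w \<noteq> 0" using assms by auto
  then show ?thesis using Im_powr_nonpos[of w] assms by simp
qed

lemma Im_c_times:
  assumes "Re S = 0" "Im S \<le> 0"
  shows "0 \<le> Im (cis (p * pi / 2) * S)"
  using assms cos_c_nonpos by (simp add: mult_nonpos_nonpos)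

lemma sums_Re_Im_signs:
  assumes "g sums S" "\<And>k. Re (g k) = 0" "\<And>k. Im (g k) \<le> 0"
  shows "Re S = 0" "Im S \<le> 0"
proof -
  have "(\<lambda>k. Re (g k)) sums Re S" using sums_Re[OF assms(1)] .
  then show "Re S = 0" using assms(2) by (simp add: sums_iff)
  have "(\<lambda>k. Im (g k)) sums Im S" using sums_Im[OF assms(1)] .
  then show "Im S \<le> 0" using sums_le[OF assms(3) _ sums_zero] by simp
qed


lemma Im_f_neg:
  assumes z: "z \<in> D_set"
  shows "Im (f_p p z) < 0"
proof -
  have zT: "z \<in> TT" using z D_sub_TT by auto
  have "(\<lambda>k. tt p k z) sums RR p z" unfolding RR_def using tt_summable[OF p1 p2 zT] by (rule summable_sums)
  then have s: "(\<lambda>k. Im (tt p k z)) sums Im (RR p z)" by (rule sums_Im)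
  have "Im (tt p k z) \<le> 0" for k
  proof -
    have "Im (aa p (Suc k) z) \<le> 0" unfolding aa_def
      using Re_plus_pos[OF p1 p2 zT, of k] z by (intro Im_powr_nonpos') (auto simp: D_set_def)
    moreover have "0 \<le> Im (bb p (Suc k) z)" unfolding bb_def
      using Re_minus_pos[OF p1 p2 zT, of k] z by (intro Im_powr_nonneg_low) (auto simp: D_set_def)
    ultimately show ?thesis by (simp add: tt_def)
  qed
  then have "Im (RR p z) \<le> 0" using sums_le[OF _ s sums_zero] by simp
  moreover have "Im (z powr (- of_real p)) < 0" using z by (intro Im_powr_neg) (auto simp: D_set_def)
  ultimately show ?thesis by (simp add: f_p_eq)
qed

lemma aa_lim: "z \<in> TT \<Longrightarrow> (\<lambda>n. aa p n z) \<longlonglongrightarrow> 0"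
proof (rule Lim_null_comparison)
  assume z: "z \<in> TT"
  show "\<forall>\<^sub>F n in sequentially. norm (aa p n z) \<le> (pi / 2 * real n) powr (-p)"
  proof (rule eventually_sequentiallyI[of 1])
    fix n :: nat assume "1 \<le> n"
    from aa_bound[OF p1 p2 z this] show "norm (aa p n z) \<le> (pi / 2 * real n) powr (-p)"
      by (simp add: mult.commute)
  qed
  have lim: "LIM n sequentially. pi / 2 * real n :> at_top"
    by (rule filterlim_tendsto_pos_mult_at_top[OF tendsto_const _ filterlim_real_sequentially]) simp
  show "(\<lambda>n. (pi / 2 * real n) powr (-p)) \<longlonglongrightarrow> 0"
    using tendsto_neg_powr[of "-p", OF _ lim] p1 by simp
qed

lemma repair:
  assumes z: "z \<in> TT"
  shows "(\<lambda>k. aa p k z - bb p (Suc k) z) sums f_p p z"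
proof -
  have s: "(\<lambda>k. tt p k z) sums RR p z" unfolding RR_def using tt_summable[OF p1 p2 z] by (rule summable_sums)
  have eq: "(\<Sum>k<n. aa p k z - bb p (Suc k) z) = aa p 0 z - aa p n z + (\<Sum>k<n. tt p k z)" for n
    by (induction n) (simp_all add: tt_def algebra_simps)
  have "(\<lambda>n. aa p 0 z - aa p n z + (\<Sum>k<n. tt p k z)) \<longlonglongrightarrow> aa p 0 z - 0 + RR p z"
    by (intro tendsto_intros aa_lim[OF z]) (use s in \<open>simp add: sums_def\<close>)
  then show ?thesis unfolding sums_def eq by (simp add: aa0 f_p_eq)
qed

lemma of_real_powr_neg: "0 \<le> y \<Longrightarrow> (of_real y :: complex) powr (- of_real p) = of_real (y powr (-p))"
  using powr_of_real[of y "-p"] by simp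

lemma real_f:
  assumes x: "0 < x" "x \<le> pi/2"
  shows "Im (f_p p (of_real x)) = 0" "0 \<le> Re (f_p p (of_real x))"
proof -
  have xT: "of_real x \<in> TT" using x by (simp add: TT_def)
  define d where "d k = (real k * pi + x) powr (-p) - (real (Suc k) * pi - x) powr (-p)" for k
  have g: "aa p k (of_real x) - bb p (Suc k) (of_real x) = of_real (d k)" for k
  proof -
    have "0 \<le> real k * pi + x" using x pi_gt_zero by simp
    moreover have "0 \<le> real (Suc k) * pi - x"
    proof -
      have "pi \<le> real (Suc k) * pi" using pi_gt_zero by simp
      then show ?thesis using x pi_gt_zero by linarith
    qed
    ultimately show ?thesis unfolding aa_def bb_def d_def
      using of_real_powr_neg[of "real k * pi + x"] of_real_powr_neg[of "real (Suc k) * pi - x"] by simp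
  qed
  have dpos: "0 \<le> d k" for k
  proof -
    have "0 \<le> real k * pi" by simp
    then have "0 < real k * pi + x" using x by linarith
    moreover have "real k * pi + x \<le> real (Suc k) * pi - x" using x by (simp add: algebra_simps)
    ultimately show ?thesis unfolding d_def using p1 powr_mono2'[of "-p" "real k * pi + x" "real (Suc k) * pi - x"] by simp
  qed
  have s: "(\<lambda>k. of_real (d k) :: complex) sums f_p p (of_real x)" using repair[OF xT] unfolding g .
  have "(\<lambda>k. Im (of_real (d k) :: complex)) sums Im (f_p p (of_real x))" by (rule sums_Im[OF s])
  then show "Im (f_p p (of_real x)) = 0" by (simp add: sums_iff)
  have "(\<lambda>k. Re (of_real (d k) :: complex)) sums Re (f_p p (of_real x))" by (rule sums_Re[OF s])
  then show "0 \<le> Re (f_p p (of_real x))" using sums_le[OF dpos sums_zero] by simp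
qed

lemma real_W:
  assumes x: "0 < x" "x \<le> pi/2"
  shows "0 \<le> Im (cis (p * pi / 2) * f_p p (of_real x))"
  using real_f[OF x] sin_c_pos by simp

lemma left_edge:
  assumes y: "0 < y"
  shows "0 \<le> Im (cis (p * pi / 2) * f_p p (Complex 0 y))"
proof -
  define z where "z = Complex 0 y"
  have zT: "z \<in> TT" by (simp add: TT_def z_def)
  have s: "(\<lambda>k. tt p k z) sums RR p z" unfolding RR_def using tt_summable[OF p1 p2 zT] by (rule summable_sums)
  have t: "tt p k z = aa p (Suc k) z - cnj (aa p (Suc k) z)" for k
  proof -
    have c: "cnj z = - z"
      by (simp add: z_def complex_eq_iff)
    have "cnj (aa p (Suc k) z) = bb p (Suc k) z" unfolding aa_def bb_def
      using Re_plus_pos[OF p1 p2 zT, of k] by (subst cnj_powr) (auto simp: c)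
    then show ?thesis by (simp add: tt_def)
  qed
  have im: "Im (aa p (Suc k) z) \<le> 0" for k unfolding aa_def
    using Re_plus_pos[OF p1 p2 zT, of k] y by (intro Im_powr_nonpos') (auto simp: z_def)
  have "Re (RR p z) = 0" "Im (RR p z) \<le> 0"
    by (rule sums_Re_Im_signs[OF s]; simp add: t im)+
  then have "0 \<le> Im (cis (p * pi / 2) * RR p z)" by (rule Im_c_times)
  moreover have "0 \<le> Im (cis (p * pi / 2) * z powr (- of_real p))"
    using y by (intro Im_c_powr_nonneg) (auto simp: z_def complex_eq_iff)
  ultimately show ?thesis unfolding z_def[symmetric] f_p_eq by (simp add: distrib_left)
qed

lemma right_edge:
  assumes y: "0 < y"
  shows "0 \<le> Im (cis (p * pi / 2) * f_p p (Complex (pi/2) y))"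
proof -
  define z where "z = Complex (pi/2) y"
  have zT: "z \<in> TT" by (simp add: TT_def z_def)
  have s: "(\<lambda>k. aa p k z - bb p (Suc k) z) sums f_p p z" by (rule repair[OF zT])
  have pos: "0 < Re (of_real (real k * pi) + z)" for k
  proof -
    have "0 \<le> real k * pi" by simp
    then show ?thesis using pi_gt_zero by (simp add: z_def add_nonneg_pos)
  qed
  have t: "aa p k z - bb p (Suc k) z = aa p k z - cnj (aa p k z)" for k
  proof -
    have c: "of_real (real (Suc k) * pi) - z = cnj (of_real (real k * pi) + z)"
      by (simp add: z_def complex_eq_iff algebra_simps)
    have "cnj (aa p k z) = bb p (Suc k) z" unfolding aa_def bb_def c
      using pos[of k] by (subst cnj_powr) auto
    then show ?thesis by simp
  qed
  have im: "Im (aa p k z) \<le> 0" for k unfolding aa_def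
    using pos[of k] y by (intro Im_powr_nonpos') (auto simp: z_def)
  have "Re (f_p p z) = 0" "Im (f_p p z) \<le> 0"
    by (rule sums_Re_Im_signs[OF s]; simp add: t im)+
  then show ?thesis unfolding z_def[symmetric] by (rule Im_c_times)
qed

end

context
  fixes p :: real
  assumes p1: "1 < p" and p2: "p < 2"
begin

lemma powr_split_bound:
  fixes w :: complex
  assumes "0 < A" "A \<le> norm w" "1 \<le> y" "y \<le> norm w"
  shows "norm (w powr (- of_real p)) \<le> A powr (-((1+p)/2)) * y powr (-((p-1)/2))"
proof -
  have nw: "0 < norm w" using assms by linarith
  have e: "-((1+p)/2) + -((p-1)/2) = -p" by (simp add: field_simps)
  have "norm (w powr (- of_real p)) = norm w powr (-((1+p)/2) + -((p-1)/2))"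
    unfolding norm_powr_neg e ..
  also have "\<dots> = norm w powr (-((1+p)/2)) * norm w powr (-((p-1)/2))" by (rule powr_add)
  also have "\<dots> \<le> A powr (-((1+p)/2)) * y powr (-((p-1)/2))"
  proof (rule mult_mono)
    show "norm w powr (-((1+p)/2)) \<le> A powr (-((1+p)/2))"
      using assms p1 by (intro powr_mono2') auto
    show "norm w powr (-((p-1)/2)) \<le> y powr (-((p-1)/2))"
      using assms p1 by (intro powr_mono2') auto
  qed auto
  finally show ?thesis .
qed

definition MQ :: "nat \<Rightarrow> real" where "MQ k = 2 * (real (Suc k) * pi / 2) powr (-((1+p)/2))"

lemma MQ_summable: "summable MQ"
proof -
  have "summable (\<lambda>n. real n powr (-((1+p)/2)))" using p1 by (simp add: summable_real_powr_iff)
  then have "summable (\<lambda>n. real (Suc n) powr (-((1+p)/2)))" by (subst summable_Suc_iff)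
  then have "summable (\<lambda>n. (2 * (pi/2) powr (-((1+p)/2))) * real (Suc n) powr (-((1+p)/2)))"
    by (rule summable_mult)
  moreover have "MQ n = (2 * (pi/2) powr (-((1+p)/2))) * real (Suc n) powr (-((1+p)/2))" for n
  proof -
    have "real (Suc n) * pi / 2 = real (Suc n) * (pi/2)" by simp
    then have "(real (Suc n) * pi / 2) powr (-((1+p)/2)) = real (Suc n) powr (-((1+p)/2)) * (pi/2) powr (-((1+p)/2))"
      using pi_gt_zero by (simp only: powr_mult[of "real (Suc n)" "pi/2"])
    then show ?thesis unfolding MQ_def by simp
  qed
  ultimately have "summable (\<lambda>n. MQ n)" by simp
  then show ?thesis by simp
qed

lemma MQ_nonneg: "0 \<le> MQ k" unfolding MQ_def by simp

lemma tt_bound_top: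
  assumes z: "z \<in> TT" and y: "1 \<le> Im z"
  shows "norm (tt p k z) \<le> MQ k * Im z powr (-((p-1)/2))"
proof -
  have A: "0 < real (Suc k) * pi / 2" using pi_gt_zero by simp
  have n1: "norm (aa p (Suc k) z) \<le> (real (Suc k) * pi / 2) powr (-((1+p)/2)) * Im z powr (-((p-1)/2))"
    unfolding aa_def
  proof (rule powr_split_bound[OF A _ y])
    show "real (Suc k) * pi / 2 \<le> norm (of_real (real (Suc k) * pi) + z)"
      using Re_plus_bound[OF p1 p2 z, of "Suc k"] complex_Re_le_cmod[of "of_real (real (Suc k) * pi) + z"] by linarith
    show "Im z \<le> norm (of_real (real (Suc k) * pi) + z)"
      using abs_Im_le_cmod[of "of_real (real (Suc k) * pi) + z"] by simp
  qed
  have n2: "norm (bb p (Suc k) z) \<le> (real (Suc k) * pi / 2) powr (-((1+p)/2)) * Im z powr (-((p-1)/2))"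
    unfolding bb_def
  proof (rule powr_split_bound[OF A _ y])
    show "real (Suc k) * pi / 2 \<le> norm (of_real (real (Suc k) * pi) - z)"
      using Re_minus_bound[OF p1 p2 z, of "Suc k"] complex_Re_le_cmod[of "of_real (real (Suc k) * pi) - z"] by linarith
    show "Im z \<le> norm (of_real (real (Suc k) * pi) - z)"
      using abs_Im_le_cmod[of "of_real (real (Suc k) * pi) - z"] by simp
  qed
  have "norm (tt p k z) \<le> norm (aa p (Suc k) z) + norm (bb p (Suc k) z)"
    unfolding tt_def by (rule norm_triangle_ineq4)
  also have "\<dots> \<le> MQ k * Im z powr (-((p-1)/2))" using n1 n2 unfolding MQ_def by (simp add: algebra_simps)
  finally show ?thesis .
qed

lemma top_bound:
  assumes z: "z \<in> TT" and y: "1 \<le> Im z"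
  shows "norm (f_p p z) \<le> (1 + suminf MQ) * Im z powr (-((p-1)/2))"
proof -
  define Y where "Y = Im z powr (-((p-1)/2))"
  have Y0: "0 \<le> Y" unfolding Y_def by simp
  have z0: "z \<noteq> 0" using y by auto
  have "norm (z powr (- of_real p)) = norm z powr (-p)" by (rule norm_powr_neg)
  also have "\<dots> \<le> Im z powr (-p)"
    using y abs_Im_le_cmod[of z] p1 by (intro powr_mono2') auto
  also have "\<dots> \<le> Y" unfolding Y_def using y p1 by (intro powr_mono) auto
  finally have b1: "norm (z powr (- of_real p)) \<le> Y" .
  have sm: "summable (\<lambda>k. MQ k * Y)" using MQ_summable by (rule summable_mult2)
  have sn: "summable (\<lambda>k. norm (tt p k z))"
    by (rule summable_comparison_test[OF _ sm]) (use tt_bound_top[OF z y] in \<open>auto simp: Y_def\<close>)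
  have "norm (RR p z) \<le> (\<Sum>k. norm (tt p k z))" unfolding RR_def by (rule summable_norm[OF sn])
  also have "\<dots> \<le> (\<Sum>k. MQ k * Y)"
    by (rule suminf_le[OF _ sn sm]) (use tt_bound_top[OF z y] in \<open>auto simp: Y_def\<close>)
  also have "\<dots> = suminf MQ * Y" by (rule suminf_mult2[OF MQ_summable, symmetric])
  finally have b2: "norm (RR p z) \<le> suminf MQ * Y" .
  have "norm (f_p p z) \<le> norm (z powr (- of_real p)) + norm (RR p z)"
    unfolding f_p_eq by (rule norm_triangle_ineq)
  also have "\<dots> \<le> (1 + suminf MQ) * Y" using b1 b2 by (simp add: algebra_simps)
  finally show ?thesis unfolding Y_def .
qed

lemma top_eventually:
  assumes e: "0 < e"
  shows "\<exists>Y\<ge>1. \<forall>z\<in>TT. Y \<le> Im z \<longrightarrow> norm (f_p p z) < e"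
proof -
  define K where "K = 1 + suminf MQ"
  have K: "0 < K" unfolding K_def using suminf_nonneg[OF MQ_summable MQ_nonneg] by simp
  have "((\<lambda>y. y powr (-((p-1)/2))) \<longlongrightarrow> 0) at_top"
    using p1 by (intro tendsto_neg_powr filterlim_ident) auto
  then have "((\<lambda>y. K * y powr (-((p-1)/2))) \<longlongrightarrow> 0) at_top"
    using tendsto_mult_right_zero by blast
  then have "eventually (\<lambda>y. K * y powr (-((p-1)/2)) < e) at_top"
    using e by (rule order_tendstoD)
  then obtain Y0 where Y0: "\<And>y. Y0 \<le> y \<Longrightarrow> K * y powr (-((p-1)/2)) < e"
    by (auto simp: eventually_at_top_linorder)
  show ?thesis
  proof (intro exI[of _ "max 1 Y0"] conjI ballI impI)
    fix z assume z: "z \<in> TT" and y: "max 1 Y0 \<le> Im z"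
    have "norm (f_p p z) \<le> K * Im z powr (-((p-1)/2))" unfolding K_def
      using y by (intro top_bound z) auto
    also have "\<dots> < e" using y by (intro Y0) auto
    finally show "norm (f_p p z) < e" .
  qed auto
qed

end

context
  fixes p :: real
  assumes p1: "1 < p" and p2: "p < 2"
begin

lemma Im_dist: "Im a - Im b \<le> dist a b"
proof -
  have "\<bar>Im (a - b)\<bar> \<le> norm (a - b)" by (rule abs_Im_le_cmod)
  then show ?thesis by (simp add: dist_norm)
qed

lemma bottom:
  assumes e: "0 < e"
  shows "\<exists>d0>0. \<forall>x d. 0 < d \<longrightarrow> d < d0 \<longrightarrow> 0 \<le> x \<longrightarrow> x \<le> pi/2 \<longrightarrow>
           -e \<le> Im (cis (p*pi/2) * f_p p (Complex x d))"
proof -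
  have RR0: "RR p 0 = 0" unfolding RR_def tt_def aa_def bb_def by simp
  have T0: "0 \<in> TT" by (simp add: TT_def)
  have "\<exists>\<eta>>0. \<forall>z\<in>TT. dist z 0 < \<eta> \<longrightarrow> dist (RR p z) (RR p 0) < e"
    using RR_cont[OF p1 p2] T0 e unfolding continuous_on_iff by blast
  then obtain \<eta> where eta: "\<eta> > 0" and etaR: "\<And>z. z \<in> TT \<Longrightarrow> dist z 0 < \<eta> \<Longrightarrow> norm (RR p z) < e"
    using RR0 by (auto simp: dist_norm)
  define h where "h = min (\<eta>/2) (pi/4)"
  have h4: "h \<le> pi/4" "h \<le> \<eta>/2" by (simp_all add: h_def)
  have h0: "0 < h" using eta by (simp add: h_def)
  have h: "0 < h" "h \<le> pi/2" "2*h \<le> \<eta>" using h0 pi_gt_zero h4 by linarith+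
  define K where "K = cbox (Complex h 0) (Complex (pi/2) 1)"
  have KT: "K \<subseteq> TT - {0}"
  proof
    fix z assume "z \<in> K"
    then have "h \<le> Re z" "Re z \<le> pi/2" by (auto simp: K_def in_cbox_complex_iff)
    then show "z \<in> TT - {0}" using h by (auto simp: TT_def)
  qed
  have "continuous_on K (\<lambda>z. cis (p*pi/2) * f_p p z)"
    by (intro continuous_intros continuous_on_subset[OF f_cont[OF p1 p2] KT])
  then have "uniformly_continuous_on K (\<lambda>z. cis (p*pi/2) * f_p p z)"
    by (rule compact_uniformly_continuous) (simp add: K_def)
  then obtain d1 where d1: "d1 > 0"
    and d1K: "\<And>x x'. x \<in> K \<Longrightarrow> x' \<in> K \<Longrightarrow> dist x' x < d1 \<Longrightarrow>
         dist (cis (p*pi/2) * f_p p x') (cis (p*pi/2) * f_p p x) < e"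
    unfolding uniformly_continuous_on_def using e by metis
  show ?thesis
  proof (intro exI[of _ "min (min d1 1) h"] conjI allI impI)
    show "0 < min (min d1 1) h" using d1 h by simp
    fix x d assume d0: "0 < d" and d: "d < min (min d1 1) h" and x0: "0 \<le> x" and x1: "x \<le> pi/2"
    show "-e \<le> Im (cis (p*pi/2) * f_p p (Complex x d))"
    proof (cases "h \<le> x")
      case True
      have K1: "Complex x d \<in> K" "Complex x 0 \<in> K" using True x1 d0 d by (auto simp: K_def in_cbox_complex_iff)
      have "Complex x d - Complex x 0 = Complex 0 d" by (simp add: complex_eq_iff)
      then have "dist (Complex x d) (Complex x 0) = d" using d0 by (simp add: dist_norm cmod_eq_Im)
      then have "dist (Complex x d) (Complex x 0) < d1" using d by simp
      then have dd: "dist (cis (p*pi/2) * f_p p (Complex x d)) (cis (p*pi/2) * f_p p (Complex x 0)) < e"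
        using d1K[OF K1(2) K1(1)] by simp
      have cx: "Complex x 0 = of_real x" by (simp add: complex_eq_iff)
      have "0 \<le> Im (cis (p*pi/2) * f_p p (Complex x 0))"
        unfolding cx using real_W[OF p1 p2, of x] True h x1 by simp
      moreover have "Im (cis (p*pi/2) * f_p p (Complex x 0)) - Im (cis (p*pi/2) * f_p p (Complex x d))
          \<le> dist (cis (p*pi/2) * f_p p (Complex x 0)) (cis (p*pi/2) * f_p p (Complex x d))"
        by (rule Im_dist)
      ultimately show ?thesis using dd by (simp add: dist_commute)
    next
      case False
      define z where "z = Complex x d"
      have zT: "z \<in> TT" using x0 x1 by (simp add: z_def TT_def)
      have "norm z \<le> \<bar>Re z\<bar> + \<bar>Im z\<bar>" by (rule cmod_le)
      also have "\<dots> < \<eta>" using False d d0 x0 h by (simp add: z_def)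
      finally have "dist z 0 < \<eta>" by simp
      then have nR: "norm (RR p z) < e" using etaR zT by blast
      have "0 \<le> Im (cis (p*pi/2) * z powr (- of_real p))"
        using x0 d0 by (intro Im_c_powr_nonneg[OF p1 p2]) (auto simp: z_def complex_eq_iff)
      moreover have "- norm (cis (p*pi/2) * RR p z) \<le> Im (cis (p*pi/2) * RR p z)"
        using abs_Im_le_cmod[of "cis (p*pi/2) * RR p z"] by linarith
      moreover have "norm (cis (p*pi/2) * RR p z) = norm (RR p z)" by (simp add: norm_mult)
      ultimately show ?thesis using nR unfolding z_def[symmetric] f_p_eq by (simp add: distrib_left)
    qed
  qed
qed

lemma W_nonneg:
  assumes z0: "z0 \<in> D_set"
  shows "0 \<le> Im (cis (p*pi/2) * f_p p z0)"
proof -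
  have main: "- Im (cis (p*pi/2) * f_p p z0) \<le> 0 + e" if e: "0 < e" for e
  proof -
    obtain Y where Y: "Y \<ge> 1" and YT: "\<And>z. z \<in> TT \<Longrightarrow> Y \<le> Im z \<Longrightarrow> norm (f_p p z) < e"
      using top_eventually[OF p1 p2 e] by blast
    obtain d0 where d0: "d0 > 0" and d0b: "\<And>x d. 0 < d \<Longrightarrow> d < d0 \<Longrightarrow> 0 \<le> x \<Longrightarrow> x \<le> pi/2 \<Longrightarrow>
           -e \<le> Im (cis (p*pi/2) * f_p p (Complex x d))"
      using bottom[OF e] by blast
    have z0p: "0 < Re z0" "Re z0 < pi/2" "0 < Im z0" using z0 by (auto simp: D_set_def)
    define R where "R = max Y (Im z0 + 1)"
    define d where "d = min (d0/2) (Im z0 / 2)"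
    have d: "0 < d" "d < d0" "d < Im z0" using d0 z0p by (auto simp: d_def)
    have dR: "d < R" using d by (simp add: R_def)
    define S where "S = cbox (Complex 0 d) (Complex (pi/2) R)"
    have z0S: "z0 \<in> S" using z0p d by (auto simp: S_def in_cbox_complex_iff R_def)
    have SD: "box (Complex 0 d) (Complex (pi/2) R) \<subseteq> D_set"
      using d by (auto simp: in_box_complex_iff D_set_def)
    have ST: "S \<subseteq> TT - {0}"
    proof
      fix z assume "z \<in> S"
      then have "0 \<le> Re z" "Re z \<le> pi/2" "d \<le> Im z" by (auto simp: S_def in_cbox_complex_iff)
      then show "z \<in> TT - {0}" using d by (auto simp: TT_def)
    qed
    have "norm (exp (\<i> * (cis (p*pi/2) * f_p p z0))) \<le> exp e"
    proof (rule maximum_modulus_frontier[where S=S and f="\<lambda>z. exp (\<i> * (cis (p*pi/2) * f_p p z))" and B="exp e"])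
      show "(\<lambda>z. exp (\<i> * (cis (p*pi/2) * f_p p z))) holomorphic_on interior S"
        unfolding S_def interior_cbox
        by (intro holomorphic_intros holomorphic_on_subset[OF f_hol[OF p1 p2] SD])
      have clS: "closure S = S" unfolding S_def by (rule closure_closed[OF closed_cbox])
      show "continuous_on (closure S) (\<lambda>z. exp (\<i> * (cis (p*pi/2) * f_p p z)))"
        unfolding clS by (intro continuous_intros continuous_on_subset[OF f_cont[OF p1 p2] ST])
      show "bounded S" by (simp add: S_def)
      show "z0 \<in> S" by (rule z0S)
      fix z assume "z \<in> frontier S"
      then have zS: "z \<in> S" and znb: "z \<notin> box (Complex 0 d) (Complex (pi/2) R)"
        unfolding S_def frontier_cbox by auto
      have zb: "0 \<le> Re z" "Re z \<le> pi/2" "d \<le> Im z" "Im z \<le> R" using zS by (auto simp: S_def in_cbox_complex_iff)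
      have key: "-e \<le> Im (cis (p*pi/2) * f_p p z)"
      proof -
        consider "Im z = R" | "Im z = d" | "Re z = 0" | "Re z = pi/2"
          using zb znb by (auto simp: in_box_complex_iff)
        then show ?thesis
        proof cases
          case 1
          then have "Y \<le> Im z" by (simp add: R_def)
          then have "norm (f_p p z) < e" using YT ST zS by blast
          moreover have "\<bar>Im (cis (p*pi/2) * f_p p z)\<bar> \<le> norm (cis (p*pi/2) * f_p p z)" by (rule abs_Im_le_cmod)
          moreover have "norm (cis (p*pi/2) * f_p p z) = norm (f_p p z)" by (simp add: norm_mult)
          ultimately show ?thesis by linarith
        next
          case 2
          then have "z = Complex (Re z) d" by (simp add: complex_eq_iff)
          then show ?thesis using d0b[of d "Re z"] d zb by simp
        next
          case 3
          then have "z = Complex 0 (Im z)" by (simp add: complex_eq_iff)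
          then have "0 \<le> Im (cis (p*pi/2) * f_p p z)" using left_edge[OF p1 p2, of "Im z"] zb d by simp
          then show ?thesis using e by linarith
        next
          case 4
          then have "z = Complex (pi/2) (Im z)" by (simp add: complex_eq_iff)
          then have "0 \<le> Im (cis (p*pi/2) * f_p p z)" using right_edge[OF p1 p2, of "Im z"] zb d by simp
          then show ?thesis using e by linarith
        qed
      qed
      show "norm (exp (\<i> * (cis (p*pi/2) * f_p p z))) \<le> exp e"
        using key by (simp add: norm_exp_eq_Re)
    qed
    then show ?thesis by (simp add: norm_exp_eq_Re)
  qed
  show ?thesis using field_le_epsilon[OF main] by simp
qed

lemma W_pos:
  assumes z0: "z0 \<in> D_set"
  shows "0 < Im (cis (p*pi/2) * f_p p z0)"
proof (rule ccontr)
  let ?W = "\<lambda>z. cis (p*pi/2) * f_p p z"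
  assume "\<not> 0 < Im (?W z0)"
  then have W0: "Im (?W z0) = 0" using W_nonneg[OF z0] by linarith
  show False
  proof (cases "?W constant_on D_set")
    case True
    then obtain k where k: "\<And>z. z \<in> D_set \<Longrightarrow> ?W z = k" unfolding constant_on_def by blast
    have "Im (f_p p z0) < 0" by (rule Im_f_neg[OF p1 p2 z0])
    then have nf: "0 < norm (f_p p z0)" by auto
    obtain Y where Y: "Y \<ge> 1" and YT: "\<And>z. z \<in> TT \<Longrightarrow> Y \<le> Im z \<Longrightarrow> norm (f_p p z) < norm (f_p p z0)"
      using top_eventually[OF p1 p2 nf] by blast
    define z1 where "z1 = Complex (Re z0) (max Y (Im z0))"
    have z1D: "z1 \<in> D_set" using z0 Y by (auto simp: z1_def D_set_def)
    have "norm (f_p p z1) < norm (f_p p z0)" using YT[of z1] z1D D_sub_TT by (auto simp: z1_def)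
    moreover have "?W z1 = ?W z0" using k z1D z0 by simp
    then have "f_p p z1 = f_p p z0" by simp
    ultimately show False by simp
  next
    case False
    have hol: "?W holomorphic_on D_set" by (intro holomorphic_intros f_hol[OF p1 p2])
    have "open (?W ` D_set)"
      by (rule open_mapping_thm[OF hol open_D convex_connected[OF convex_D] open_D subset_refl False])
    moreover have "?W z0 \<in> ?W ` D_set" using z0 by blast
    ultimately obtain r where r: "r > 0" "ball (?W z0) r \<subseteq> ?W ` D_set"
      by (meson openE)
    define q where "q = ?W z0 - \<i> * of_real (r/2)"
    have "dist (?W z0) q = r/2" using r by (simp add: q_def dist_norm norm_mult)
    then have "q \<in> ball (?W z0) r" using r by simp
    then obtain z' where z': "z' \<in> D_set" "?W z' = q" using r by blast
    have "Im q < 0" using W0 r by (simp add: q_def)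
    moreover have "0 \<le> Im (?W z')" by (rule W_nonneg[OF z'(1)])
    ultimately show False using z' by simp
  qed
qed

end

theorem mainTheorem9:
  fixes p :: real
  assumes "1 < p" and "p < 2"
  shows "f_p p ` D_set \<subseteq> Delta_p p"
proof
  fix w assume "w \<in> f_p p ` D_set"
  then obtain z where z: "z \<in> D_set" and w: "w = f_p p z" by blast
  have imw: "Im w < 0" using Im_f_neg[OF assms z] w by simp
  have pos: "0 < Im (cis (p*pi/2) * w)" using W_pos[OF assms z] w by simp
  have a1: "Arg w < 0" using imw Arg_neg_iff by blast
  have w0: "w \<noteq> 0" using imw by auto
  have "w = of_real (norm w) * cis (Arg w)" using rcis_cmod_Arg[of w] by (simp add: rcis_def)
  then have "cis (p*pi/2) * w = of_real (norm w) * cis (p*pi/2 + Arg w)"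
    by (metis cis_mult mult.left_commute)
  then have "0 < norm w * sin (p*pi/2 + Arg w)" using pos by simp
  then have s: "0 < sin (p*pi/2 + Arg w)" using w0 by (simp add: zero_less_mult_iff)
  have "- (pi * p / 2) < Arg w"
  proof (rule ccontr)
    assume "\<not> - (pi * p / 2) < Arg w"
    then have t: "p*pi/2 + Arg w \<le> 0" by (simp add: mult.commute)
    have "- pi < Arg w" using Arg_bounded[of w] by simp
    have pp: "0 \<le> p*pi/2" using assms pi_gt_zero by simp
    have "0 \<le> sin (- (p*pi/2 + Arg w))"
    proof (rule sin_ge_zero)
      show "0 \<le> - (p*pi/2 + Arg w)" using t by linarith
      show "- (p*pi/2 + Arg w) \<le> pi" using pp \<open>- pi < Arg w\<close> by linarith
    qed
    then show False using s sin_minus[of "p*pi/2 + Arg w"] by linarith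
  qed
  then show "w \<in> Delta_p p" using a1 by (simp add: Delta_p_def)
qed

end
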